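(* Let $X$ be a compact Riemannian manifold, $T:X\to X$ a diffeomorphism, and $f:X\to\mathbb{R}^\omega$ a continuous cocycle. Then for every $\epsilon>0$ there is a continuous cocycle $g:X\to\mathbb{R}^\omega$ with $\sup_{x\in X} d(f(x),g(x))<\epsilon$ such that the skew-product $T_g(x,v)=(T(x),g(x)+v)$ on $X\times\mathbb{R}^\omega$ is not transitive. In particular, no cocycle $X\to\mathbb{R}^\omega$ is stably transitive in the supremum metric, i.e. the set of transitive cocycles has empty interior.
   Context: $\mathbb{R}^\omega=\prod_{n=1}^\infty\mathbb{R}$ with metric $d(\{a_n\},\{b_n\})=\sum_{n=1}^\infty 2^{-n}\frac{|a_n-b_n|}{1+|a_n-b_n|}$. A map is transitive if some point has dense forward orbit; a cocycle $f$ is transitive if $T_f$ is, and stably transitive if all cocycles sufficiently close to it in the supremum metric $\sup_x d(f(x),g(x))$ are transitive. *)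

theory Defs
  imports "HOL-Analysis.Analysis"
begin

text \<open>The space R^omega = nat => real with the metric
  d(a,b) = sum_n 2^-(n+1) |a n - b n| / (1 + |a n - b n|)
  (index n here corresponds to index n+1 in the paper).\<close>
definition dR :: "(nat \<Rightarrow> real) \<Rightarrow> (nat \<Rightarrow> real) \<Rightarrow> real" where
  "dR a b = (\<Sum>n. (1/2)^(Suc n) * (\<bar>a n - b n\<bar> / (1 + \<bar>a n - b n\<bar>)))"

definition cont_cocycle :: "'a::metric_space set \<Rightarrow> ('a \<Rightarrow> nat \<Rightarrow> real) \<Rightarrow> bool" where
  "cont_cocycle X f \<longleftrightarrow>
     (\<forall>x\<in>X. \<forall>e>0. \<exists>\<delta>>0. \<forall>y\<in>X. dist y x < \<delta> \<longrightarrow> dR (f y) (f x) < e)"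

definition skew :: "('a \<Rightarrow> 'a) \<Rightarrow> ('a \<Rightarrow> nat \<Rightarrow> real) \<Rightarrow> 'a \<times> (nat \<Rightarrow> real) \<Rightarrow> 'a \<times> (nat \<Rightarrow> real)" where
  "skew T g p = (T (fst p), (\<lambda>n. g (fst p) n + snd p n))"

definition transitive_cocycle :: "'a::metric_space set \<Rightarrow> ('a \<Rightarrow> 'a) \<Rightarrow> ('a \<Rightarrow> nat \<Rightarrow> real) \<Rightarrow> bool" where
  "transitive_cocycle X T g \<longleftrightarrow>
     (\<exists>x0\<in>X. \<exists>v0. \<forall>x\<in>X. \<forall>v. \<forall>r>0. \<exists>k::nat.
        dist (fst ((skew T g ^^ k) (x0, v0))) x < r \<and> dR (snd ((skew T g ^^ k) (x0, v0))) v < r)"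

text \<open>sup_x d(f x, g x) < eps, written without Sup to avoid the empty-set convention.\<close>
definition sup_dist_less :: "'a set \<Rightarrow> ('a \<Rightarrow> nat \<Rightarrow> real) \<Rightarrow> ('a \<Rightarrow> nat \<Rightarrow> real) \<Rightarrow> real \<Rightarrow> bool" where
  "sup_dist_less X f g eps \<longleftrightarrow> (\<exists>e<eps. \<forall>x\<in>X. dR (f x) (g x) \<le> e)"

definition stably_transitive :: "'a::metric_space set \<Rightarrow> ('a \<Rightarrow> 'a) \<Rightarrow> ('a \<Rightarrow> nat \<Rightarrow> real) \<Rightarrow> bool" where
  "stably_transitive X T f \<longleftrightarrow>
     (\<exists>\<delta>>0. \<forall>g. cont_cocycle X g \<and> sup_dist_less X f g \<delta> \<longrightarrow> transitive_cocycle X T g)"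

end

theory Submission
  imports Defs
begin

definition dterm :: "(nat \<Rightarrow> real) \<Rightarrow> (nat \<Rightarrow> real) \<Rightarrow> nat \<Rightarrow> real" where
  "dterm a b n = (1/2)^(Suc n) * (\<bar>a n - b n\<bar> / (1 + \<bar>a n - b n\<bar>))"

lemma dterm_nonneg: "0 \<le> dterm a b n"
  unfolding dterm_def by simp

lemma dterm_le: "dterm a b n \<le> (1/2)^(Suc n)"
proof -
  have "\<bar>a n - b n\<bar> / (1 + \<bar>a n - b n\<bar>) \<le> 1" by simp
  then show ?thesis unfolding dterm_def
    by (intro mult_left_le) auto
qed

lemma dterm_summable: "summable (dterm a b)"
proof (rule summable_comparison_test[where g="\<lambda>n. (1/2)^(Suc n)"])
  show "\<exists>N. \<forall>n\<ge>N. norm (dterm a b n) \<le> (1/2)^(Suc n)"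
    using dterm_le dterm_nonneg by auto
  show "summable (\<lambda>n. (1/2::real)^(Suc n))"
    using summable_geometric[of "1/2::real"] summable_mult[of _ "1/2"]
    by (simp add: summable_mult)
qed

lemma dR_eq: "dR a b = suminf (dterm a b)"
  unfolding dR_def dterm_def by simp

lemma dR_ge_term: "dterm a b N \<le> dR a b"
  unfolding dR_eq
  using sum_le_suminf[of "dterm a b" "{N}"] dterm_summable dterm_nonneg by auto

lemma dR_single:
  assumes "\<And>n. n \<noteq> N \<Longrightarrow> a n = b n"
  shows "dR a b \<le> (1/2)^(Suc N)"
proof -
  let ?h = "\<lambda>n. if n = N then (1/2::real)^(Suc n) else 0"
  have s: "?h sums (1/2)^(Suc N)" using sums_single[of N "\<lambda>n. (1/2::real)^(Suc n)"] .
  have "suminf (dterm a b) \<le> suminf ?h"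
  proof (rule suminf_le)
    fix n show "dterm a b n \<le> ?h n"
    proof (cases "n = N")
      case True then show ?thesis using dterm_le[of a b n] by simp
    next
      case False then show ?thesis using assms[of n] by (simp add: dterm_def)
    qed
  qed (use dterm_summable s sums_summable in blast)+
  then show ?thesis using s sums_unique unfolding dR_eq by force
qed

lemma dR_upd_le: "dR ((a::nat\<Rightarrow>real)(N := 0)) (b(N := 0)) \<le> dR a b"
  unfolding dR_eq
proof (rule suminf_le)
  fix n show "dterm (a(N := 0)) (b(N := 0)) n \<le> dterm a b n"
    using dterm_nonneg[of a b n] by (cases "n = N") (simp_all add: dterm_def)
qed (rule dterm_summable)+

lemma orbit_N:
  assumes "\<And>x. g x N = 0"
  shows "snd ((skew T g ^^ k) p) N = snd p N"
  by (induction k) (auto simp: skew_def assms)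

lemma not_trans:
  assumes "\<And>x. g x N = 0"
  shows "\<not> transitive_cocycle X T g"
proof
  assume "transitive_cocycle X T g"
  then obtain x0 v0 where x0: "x0 \<in> X" and
    H: "\<forall>x\<in>X. \<forall>v. \<forall>r>0. \<exists>k::nat.
        dist (fst ((skew T g ^^ k) (x0, v0))) x < r \<and> dR (snd ((skew T g ^^ k) (x0, v0))) v < r"
    unfolding transitive_cocycle_def by blast
  let ?v = "v0(N := v0 N + 1)"
  let ?r = "(1/2::real)^(Suc N) * (1/2)"
  have "?r > 0" by simp
  have "\<exists>k::nat. dist (fst ((skew T g ^^ k) (x0, v0))) x0 < ?r \<and> dR (snd ((skew T g ^^ k) (x0, v0))) ?v < ?r"
    using H x0 \<open>?r > 0\<close> by blast
  then obtain k where k: "dR (snd ((skew T g ^^ k) (x0, v0))) ?v < ?r" by blast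
  have "dterm (snd ((skew T g ^^ k) (x0, v0))) ?v N = ?r"
  proof -
    have "snd ((skew T g ^^ k) (x0, v0)) N = v0 N"
      using orbit_N[where g=g and N=N and T=T and k=k and p="(x0,v0)"] assms by simp
    then show ?thesis by (simp add: dterm_def)
  qed
  with dR_ge_term[of "snd ((skew T g ^^ k) (x0, v0))" ?v N] k show False by linarith
qed

theorem mainTheorem6:
  fixes X :: "'a::metric_space set" and T :: "'a \<Rightarrow> 'a" and f :: "'a \<Rightarrow> nat \<Rightarrow> real"
  assumes "compact X"
    and "\<exists>T'. homeomorphism X X T T'"
    and "cont_cocycle X f"
  shows "(\<forall>\<epsilon>>0. \<exists>g. cont_cocycle X g \<and> sup_dist_less X f g \<epsilon> \<and> \<not> transitive_cocycle X T g)
         \<and> \<not> stably_transitive X T f"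
proof -
  have A: "\<exists>g. cont_cocycle X g \<and> sup_dist_less X f g \<epsilon> \<and> \<not> transitive_cocycle X T g"
    if "\<epsilon> > 0" for \<epsilon> :: real
  proof -
    have "\<exists>n. (1/2::real)^n < \<epsilon>"
      by (rule real_arch_pow_inv) (use that in auto)
    then obtain N where N: "(1/2::real)^N < \<epsilon>" by blast
    have N': "(1/2::real)^(Suc N) < \<epsilon>"
    proof -
      have "(1/2::real)^(Suc N) \<le> (1/2)^N" by (rule power_decreasing) auto
      then show ?thesis using N by linarith
    qed
    define g where "g x = (f x)(N := 0)" for x
    have c: "cont_cocycle X g"
      unfolding cont_cocycle_def g_def
    proof (intro ballI allI impI)
      fix x e assume "x \<in> X" "(e::real) > 0"
      with assms(3) obtain \<delta> where "\<delta> > 0" "\<forall>y\<in>X. dist y x < \<delta> \<longrightarrow> dR (f y) (f x) < e"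
        unfolding cont_cocycle_def by blast
      then show "\<exists>\<delta>>0. \<forall>y\<in>X. dist y x < \<delta> \<longrightarrow> dR ((f y)(N := 0)) ((f x)(N := 0)) < e"
      proof (intro exI conjI ballI impI)
        fix y assume "y \<in> X" "dist y x < \<delta>"
        then have "dR (f y) (f x) < e" using \<open>\<forall>y\<in>X. dist y x < \<delta> \<longrightarrow> dR (f y) (f x) < e\<close> by blast
        then show "dR ((f y)(N := 0)) ((f x)(N := 0)) < e"
          using dR_upd_le[of "f y" N "f x"] by linarith
      qed (rule \<open>\<delta> > 0\<close>)
    qed
    have s: "sup_dist_less X f g \<epsilon>"
    proof -
      have "\<forall>x\<in>X. dR (f x) (g x) \<le> (1/2)^(Suc N)"
      proof
        fix x show "dR (f x) (g x) \<le> (1/2)^(Suc N)"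
          by (rule dR_single) (simp add: g_def)
      qed
      then show ?thesis unfolding sup_dist_less_def using N' by blast
    qed
    have "\<not> transitive_cocycle X T g"
      by (rule not_trans[of g N]) (simp add: g_def)
    with c s show ?thesis by blast
  qed
  moreover have "\<not> stably_transitive X T f"
    unfolding stably_transitive_def
  proof
    assume "\<exists>\<delta>>0. \<forall>g. cont_cocycle X g \<and> sup_dist_less X f g \<delta> \<longrightarrow> transitive_cocycle X T g"
    then obtain \<delta> where d: "\<delta> > 0" "\<forall>g. cont_cocycle X g \<and> sup_dist_less X f g \<delta> \<longrightarrow> transitive_cocycle X T g" by blast
    from A[OF d(1)] obtain g where "cont_cocycle X g" "sup_dist_less X f g \<delta>" "\<not> transitive_cocycle X T g" by blast
    with d(2) show False by blast
  qed
  ultimately show ?thesis by blast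
qed

end
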